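(* For $t>0$ let $\tilde f_t(z)=\exp(-t/(z+1))$, $z\in\mathbb{C}_+$. Then \[\|\tilde f_t\|_{\mathcal{B}}=\begin{cases}2-e^{-t},&t\in(0,1],\\ 2-e^{-1}+e^{-1}\log t,&t>1.\end{cases}\]
   Context: $\mathbb{C}_+=\{\Re z>0\}$. For holomorphic $f$ on $\mathbb{C}_+$, $\|f\|_{\mathcal{B}}=\sup_{z\in\mathbb{C}_+}|f(z)|+\int_0^\infty\sup_{y\in\mathbb{R}}|f'(x+iy)|\,dx$. *)

theory Defs
  imports "HOL-Analysis.Analysis"
begin

definition right_half_plane :: "complex set" where
  "right_half_plane = {z. Re z > 0}"

text \<open>Valued in [0,infinity] (ennreal), since it may be infinite.\<close>
definition B_norm :: "(complex \<Rightarrow> complex) \<Rightarrow> ennreal" where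
  "B_norm f =
     (SUP z\<in>right_half_plane. ennreal (cmod (f z))) +
     (\<integral>\<^sup>+ x\<in>{0<..}. (SUP y::real. ennreal (cmod (deriv f (Complex x y)))) \<partial>lborel)"

definition f_tilde :: "real \<Rightarrow> complex \<Rightarrow> complex" where
  "f_tilde t z = exp (- complex_of_real t / (z + 1))"

end

theory Submission imports Defs "HOL-Real_Asymp.Real_Asymp" begin

definition S :: "real \<Rightarrow> real \<Rightarrow> real" where
  "S t a = (if a \<le> t then exp (-1) / a else t / a^2 * exp (- t / a))"

lemma deriv_ft:
  assumes "z + 1 \<noteq> 0"
  shows "deriv (f_tilde t) z = complex_of_real t / (z+1)^2 * exp (- complex_of_real t / (z + 1))"
proof -
  have "((\<lambda>z. exp (- complex_of_real t / (z + 1))) has_field_derivative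
          (complex_of_real t / (z+1)^2 * exp (- complex_of_real t / (z + 1)))) (at z)"
    using assms by (auto intro!: derivative_eq_intros simp: power2_eq_square field_simps)
  then show ?thesis unfolding f_tilde_def[abs_def] by (rule DERIV_imp_deriv)
qed

lemma cmod_deriv:
  assumes "x + 1 > 0"
  shows "cmod (deriv (f_tilde t) (Complex x y)) =
     \<bar>t\<bar> / ((x+1)^2 + y^2) * exp (- t * (x+1) / ((x+1)^2 + y^2))"
proof -
  have w: "Complex x y + 1 = Complex (x+1) y" by (simp add: complex_eq_iff)
  have nz: "Complex (x+1) y \<noteq> 0" using assms by (simp add: complex_eq_iff)
  have n2: "(cmod (Complex (x+1) y))^2 = (x+1)^2 + y^2" by (simp add: cmod_def)
  have "cmod (deriv (f_tilde t) (Complex x y)) =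
      cmod (complex_of_real t / (Complex (x+1) y)^2) * exp (Re (- complex_of_real t / Complex (x+1) y))"
  proof -
    have "deriv (f_tilde t) (Complex x y) = complex_of_real t / (Complex (x+1) y)^2 * exp (- complex_of_real t / Complex (x+1) y)"
      using deriv_ft[of "Complex x y" t] nz w by simp
    then show ?thesis by (simp only: norm_mult norm_exp_eq_Re)
  qed
  also have "cmod (complex_of_real t / (Complex (x+1) y)^2) = \<bar>t\<bar> / ((x+1)^2 + y^2)"
    by (simp add: norm_divide norm_power n2)
  also have "Re (- complex_of_real t / Complex (x+1) y) = - t * (x+1) / ((x+1)^2 + y^2)"
    by (simp add: Re_divide n2)
  finally show ?thesis .
qed

lemma key1:
  fixes v :: real shows "v * exp (- v) \<le> exp (-1)"
proof -
  have "v \<le> exp (v - 1)" using exp_ge_add_one_self[of "v-1"] by simp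
  then have "v * exp (-v) \<le> exp (v-1) * exp (-v)" by (simp add: mult_right_mono)
  also have "\<dots> = exp (-1)" by (simp add: exp_add[symmetric])
  finally show ?thesis .
qed

lemma key2:
  fixes a u u0 :: real
  assumes "a > 0" "0 < u" "u \<le> u0" "a * u0 \<le> 1"
  shows "u * exp (- a * u) \<le> u0 * exp (- a * u0)"
proof -
  define r where "r = u / u0"
  have u0: "u0 > 0" using assms by linarith
  have r: "0 < r" "r \<le> 1" using assms u0 by (auto simp: r_def)
  have u: "u = r * u0" using u0 by (simp add: r_def)
  have "a * (u - u0) = (a * u0) * (r - 1)" by (simp add: u algebra_simps)
  also have "\<dots> \<ge> r - 1" using r assms(4) u0 assms(1)
    by (smt (verit) mult_le_cancel_right1 mult_nonneg_nonneg)
  finally have "exp (r - 1) \<le> exp (a * (u - u0))" by simp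
  moreover have "r \<le> exp (r - 1)" using exp_ge_add_one_self[of "r-1"] by simp
  ultimately have "r \<le> exp (a * (u - u0))" by linarith
  then have "r * u0 * exp (-a*u) \<le> exp (a * (u - u0)) * u0 * exp (-a*u)"
    using u0 by (intro mult_right_mono) auto
  also have "exp (a * (u - u0)) * u0 * exp (-a*u) = u0 * exp (- a * u0)"
    by (simp add: exp_add[symmetric] algebra_simps)
  finally show ?thesis by (simp add: u)
qed

lemma bound:
  assumes "t > 0" "a > 0" "s \<ge> a^2"
  shows "t / s * exp (- t * a / s) \<le> S t a"
proof -
  have s: "s > 0" using assms by (smt (verit) zero_less_power)
  define u where "u = t / s"
  have u: "u > 0" using s assms by (simp add: u_def)
  have e: "t / s * exp (- t * a / s) = u * exp (- a * u)" by (simp add: u_def)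
  show ?thesis
  proof (cases "a \<le> t")
    case True
    have "(a*u) * exp (- (a*u)) \<le> exp (-1)" by (rule key1)
    then have "u * exp (- a * u) \<le> exp (-1) / a" using assms(2)
      by (simp add: field_simps)
    then show ?thesis using e unfolding S_def if_P[OF True] by linarith
  next
    case False
    have "u \<le> t / a^2" unfolding u_def using assms s
      by (intro divide_left_mono) auto
    moreover have "a * (t / a^2) \<le> 1" using False assms by (simp add: power2_eq_square field_simps)
    ultimately have "u * exp (- a * u) \<le> (t / a^2) * exp (- a * (t/a^2))"
      using key2[OF assms(2) u] by blast
    also have "- a * (t/a^2) = - t / a" using assms(2) by (simp add: power2_eq_square field_simps)
    finally show ?thesis using e unfolding S_def if_not_P[OF False] by linarith
  qed
qed

lemma attained:
  assumes "t > 0" "a > 0"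
  shows "\<exists>y. t / (a^2 + y^2) * exp (- t * a / (a^2 + y^2)) = S t a"
proof (cases "a \<le> t")
  case True
  define y where "y = sqrt (t * a - a^2)"
  have "t * a - a^2 \<ge> 0" using True assms by (simp add: power2_eq_square mult_right_mono)
  then have y2: "y^2 = t * a - a^2" by (simp add: y_def)
  have "t / (a^2 + y^2) * exp (- t * a / (a^2 + y^2)) = exp (-1) / a"
    using assms by (simp add: y2)
  then show ?thesis using True by (auto simp: S_def)
next
  case False
  have h: "t / (a^2 + 0^2) * exp (- t * a / (a^2 + 0^2)) = t / a^2 * exp (- t / a)"
    using assms by (simp add: power2_eq_square)
  show ?thesis unfolding S_def if_not_P[OF False] by (rule exI[of _ 0]) (rule h)
qed

lemma sup_deriv:
  assumes "t > 0" "x \<ge> 0"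
  shows "(SUP y. ennreal (cmod (deriv (f_tilde t) (Complex x y)))) = ennreal (S t (x+1))"
proof (rule antisym)
  have a: "x + 1 > 0" using assms by simp
  show "(SUP y. ennreal (cmod (deriv (f_tilde t) (Complex x y)))) \<le> ennreal (S t (x+1))"
  proof (rule SUP_least)
    fix y
    have "cmod (deriv (f_tilde t) (Complex x y)) \<le> S t (x+1)"
      unfolding cmod_deriv[OF a] using assms bound[OF assms(1) a, of "(x+1)^2 + y^2"] by simp
    then show "ennreal (cmod (deriv (f_tilde t) (Complex x y))) \<le> ennreal (S t (x+1))"
      by (rule ennreal_leI)
  qed
  obtain y where y: "t / ((x+1)^2 + y^2) * exp (- t * (x+1) / ((x+1)^2 + y^2)) = S t (x+1)"
    using attained[OF assms(1) a] by blast
  have "cmod (deriv (f_tilde t) (Complex x y)) = S t (x+1)"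
    unfolding cmod_deriv[OF a] using assms y by simp
  then show "ennreal (S t (x+1)) \<le> (SUP y. ennreal (cmod (deriv (f_tilde t) (Complex x y))))"
    by (intro SUP_upper2[of y]) auto
qed

lemma sup_f:
  assumes "t > 0"
  shows "(SUP z\<in>right_half_plane. ennreal (cmod (f_tilde t z))) = 1"
proof (rule antisym)
  show "(SUP z\<in>right_half_plane. ennreal (cmod (f_tilde t z))) \<le> 1"
  proof (rule SUP_least)
    fix z assume z: "z \<in> right_half_plane"
    have "Re (- complex_of_real t / (z + 1)) = - t * (Re z + 1) / (cmod (z+1))^2"
      by (simp add: Re_divide cmod_power2)
    also have "\<dots> \<le> 0" using z assms unfolding right_half_plane_def
      by (intro divide_nonpos_nonneg) (auto simp: mult_le_0_iff)
    finally have "cmod (f_tilde t z) \<le> 1" by (simp add: f_tilde_def)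
    then show "ennreal (cmod (f_tilde t z)) \<le> 1" using ennreal_leI by fastforce
  qed
  show "1 \<le> (SUP z\<in>right_half_plane. ennreal (cmod (f_tilde t z)))"
  proof (rule dense_le)
    fix e :: ennreal assume "e < 1"
    then obtain r where r: "e = ennreal r" "r < 1" "r \<ge> 0"
      by (metis ennreal_cases ennreal_less_one_iff ennreal_less_top infinity_ennreal_def less_trans top_greatest not_le ennreal_one_less_top)
    show "e \<le> (SUP z\<in>right_half_plane. ennreal (cmod (f_tilde t z)))"
    proof (cases "r = 0")
      case True then show ?thesis using r by simp
    next
      case False
      then have r0: "r > 0" using r by simp
      define c where "c = - ln r"
      have c: "c > 0" using r r0 by (simp add: c_def)
      define y where "y = sqrt (2 * t / c)"
      have y2: "y^2 = 2 * t / c" using c assms by (simp add: y_def)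
      define z where "z = Complex 1 y"
      have zin: "z \<in> right_half_plane" by (simp add: z_def right_half_plane_def)
      have zz: "z + 1 = Complex 2 y" by (simp add: z_def complex_eq_iff)
      have n2: "(cmod (Complex 2 y))^2 = 4 + y^2" by (simp add: cmod_def)
      have re: "Re (- complex_of_real t / (z + 1)) = - (2 * t) / (4 + y^2)"
        by (simp add: zz Re_divide n2)
      have yp: "y^2 > 0" using y2 c assms by simp
      have "2 * t / (4 + y^2) \<le> 2 * t / y^2"
        using assms yp by (intro divide_left_mono) (auto intro!: mult_pos_pos add_pos_nonneg)
      also have "\<dots> = c" using y2 c assms by simp
      finally have "- c \<le> - (2 * t) / (4 + y^2)" by simp
      then have "exp (- c) \<le> exp (Re (- complex_of_real t / (z + 1)))" unfolding re by simp
      also have "exp (- c) = r" using r0 by (simp add: c_def)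
      finally have "r \<le> cmod (f_tilde t z)" by (simp add: f_tilde_def)
      then have "e \<le> ennreal (cmod (f_tilde t z))" using r by (simp add: ennreal_leI)
      then show ?thesis using zin by (intro SUP_upper2[of z]) auto
    qed
  qed
qed

lemma int_f2:
  assumes "t > 0" "a \<ge> 0"
  shows "(\<integral>\<^sup>+x\<in>{a..}. ennreal (t / (x+1)^2 * exp (- t / (x+1))) \<partial>lborel)
          = ennreal (1 - exp (- t / (a+1)))"
proof (rule nn_integral_FTC_atLeast)
  show "(\<lambda>x::real. t / (x+1)^2 * exp (- t/(x+1))) \<in> borel_measurable borel" by measurable
  show "((\<lambda>x::real. exp (- t / (x+1))) \<longlongrightarrow> 1) at_top" by real_asymp
  fix x assume x: "a \<le> x"
  then have x1: "x + 1 \<noteq> 0" using assms by simp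
  show "((\<lambda>x. exp (- t / (x+1))) has_real_derivative t / (x+1)^2 * exp (- t/(x+1))) (at x)"
    using x1 by (auto intro!: derivative_eq_intros simp: power2_eq_square field_simps)
  show "0 \<le> t / (x+1)^2 * exp (- t/(x+1))" using assms by simp
qed

lemma int_f1:
  assumes "t > 1"
  shows "(\<integral>\<^sup>+x\<in>{0..t-1}. ennreal (exp (-1) / (x+1)) \<partial>lborel) = ennreal (exp (-1) * ln t)"
proof -
  have "(\<integral>\<^sup>+x\<in>{0..t-1}. ennreal (exp (-1) / (x+1)) \<partial>lborel) =
        ennreal (exp (-1) * ln ((t-1)+1) - exp (-1) * ln (0+1))"
  proof (rule nn_integral_FTC_Icc)
    show "(\<lambda>x::real. exp (-1) / (x+1)) \<in> borel_measurable borel" by measurable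
    fix x assume x: "x \<in> {0..t-1}"
    then have x1: "x + 1 > 0" by simp
    show "((\<lambda>x. exp (-1) * ln (x+1)) has_real_derivative exp (-1) / (x+1)) (at x)"
      using x1 by (auto intro!: derivative_eq_intros simp: field_simps)
    show "0 \<le> exp (-1) / (x+1)" using x1 by simp
  qed (use assms in simp)
  then show ?thesis by simp
qed

lemma integral_part:
  assumes "t > 0"
  shows "(\<integral>\<^sup>+ x\<in>{0<..}. (SUP y::real. ennreal (cmod (deriv (f_tilde t) (Complex x y)))) \<partial>lborel)
     = ennreal (if t \<le> 1 then 1 - exp (- t) else 1 - exp (-1) + exp (-1) * ln t)"
proof -
  define f1 where "f1 x = exp (-1) / (x+1)" for x :: real
  define f2 where "f2 x = t / (x+1)^2 * exp (- t/(x+1))" for x :: real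
  have "(\<integral>\<^sup>+ x\<in>{0<..}. (SUP y::real. ennreal (cmod (deriv (f_tilde t) (Complex x y)))) \<partial>lborel)
      = (\<integral>\<^sup>+ x\<in>{0<..}. ennreal (S t (x+1)) \<partial>lborel)"
    by (rule nn_integral_cong) (auto simp: sup_deriv[OF assms] indicator_def)
  also have "\<dots> = ennreal (if t \<le> 1 then 1 - exp (- t) else 1 - exp (-1) + exp (-1) * ln t)"
  proof (cases "t \<le> 1")
    case True
    have "(\<integral>\<^sup>+ x\<in>{0<..}. ennreal (S t (x+1)) \<partial>lborel) = (\<integral>\<^sup>+ x\<in>{0..}. ennreal (f2 x) \<partial>lborel)"
    proof (rule nn_integral_cong_AE)
      show "AE x in lborel. ennreal (S t (x+1)) * indicator {0<..} x = ennreal (f2 x) * indicator {0..} x"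
        using AE_lborel_singleton[of 0]
      proof eventually_elim
        case (elim x)
        show ?case
        proof (cases "x > 0")
          case True
          then have "\<not> x + 1 \<le> t" using \<open>t \<le> 1\<close> by simp
          then show ?thesis using True by (simp add: S_def f2_def indicator_def)
        qed (use elim in \<open>auto simp: indicator_def\<close>)
      qed
    qed
    also have "\<dots> = ennreal (1 - exp (- t / (0+1)))" unfolding f2_def
      by (rule int_f2) (use assms in auto)
    finally show ?thesis using True by simp
  next
    case False
    have "(\<integral>\<^sup>+ x\<in>{0<..}. ennreal (S t (x+1)) \<partial>lborel) =
       (\<integral>\<^sup>+ x. ennreal (f1 x) * indicator {0..t-1} x + ennreal (f2 x) * indicator {t-1..} x \<partial>lborel)"
    proof (rule nn_integral_cong_AE)
      show "AE x in lborel. ennreal (S t (x+1)) * indicator {0<..} x =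
              ennreal (f1 x) * indicator {0..t-1} x + ennreal (f2 x) * indicator {t-1..} x"
        using AE_lborel_singleton[of 0] AE_lborel_singleton[of "t-1"]
      proof eventually_elim
        case (elim x)
        consider "x < 0" | "0 < x" "x < t - 1" | "t - 1 < x" using elim by linarith
        then show ?case
        proof cases
          case 1 then show ?thesis using False by (simp add: indicator_def)
        next
          case 2 then show ?thesis by (simp add: indicator_def S_def f1_def)
        next
          case 3 then show ?thesis using False by (simp add: indicator_def S_def f2_def)
        qed
      qed
    qed
    also have "\<dots> = (\<integral>\<^sup>+ x\<in>{0..t-1}. ennreal (f1 x) \<partial>lborel) + (\<integral>\<^sup>+ x\<in>{t-1..}. ennreal (f2 x) \<partial>lborel)"
      by (rule nn_integral_add) (auto simp: f1_def f2_def)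
    also have "\<dots> = ennreal (exp (-1) * ln t) + ennreal (1 - exp (- t / ((t-1)+1)))"
      unfolding f1_def f2_def using int_f1[of t] int_f2[of t "t-1"] False assms by simp
    also have "\<dots> = ennreal (1 - exp (-1) + exp (-1) * ln t)"
      using False by (subst ennreal_plus[symmetric]) auto
    finally show ?thesis using False by simp
  qed
  finally show ?thesis .
qed

theorem lemma3p4:
  fixes t :: real
  assumes "t > 0"
  shows "B_norm (f_tilde t) =
           (if t \<le> 1 then ennreal (2 - exp (- t))
            else ennreal (2 - exp (-1) + exp (-1) * ln t))"
proof -
  have "B_norm (f_tilde t) = 1 + ennreal (if t \<le> 1 then 1 - exp (- t) else 1 - exp (-1) + exp (-1) * ln t)"
    unfolding B_norm_def sup_f[OF assms] integral_part[OF assms] ..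
  also have "\<dots> = (if t \<le> 1 then ennreal (2 - exp (- t))
            else ennreal (2 - exp (-1) + exp (-1) * ln t))"
  proof (cases "t \<le> 1")
    case True
    have "0 \<le> 1 - exp (- t)" using assms by simp
    then have "ennreal 1 + ennreal (1 - exp (- t)) = ennreal (1 + (1 - exp (- t)))"
      by (subst ennreal_plus) auto
    then show ?thesis using True by simp
  next
    case False
    have "0 \<le> 1 - exp (- 1 :: real)" by simp
    moreover have "0 \<le> exp (-1) * ln t" using False by simp
    ultimately have "0 \<le> 1 - exp (- 1) + exp (-1) * ln t" by linarith
    then have "ennreal 1 + ennreal (1 - exp (- 1) + exp (-1) * ln t) = ennreal (1 + (1 - exp (- 1) + exp (-1) * ln t))"
      by (subst ennreal_plus) auto
    then show ?thesis using False by (simp add: algebra_simps)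
  qed
  finally show ?thesis .
qed

end
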